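(* Let $M$ be a pointed metric space and $\mu\in S_{\mathcal{F}(M)}$. Suppose that for every $\eta>0$, $\mu$ can be written as a norm-convergent series $\mu=\sum_{k=1}^\infty a_k m_{x_ky_k}$ with $a_k\in\mathbb{R}$, $x_k\neq y_k$, $\sum_{k}|a_k|<1+\eta$, and such that each pair $(x_k,y_k)$ is discretely connectable in $M$. Then $\mu$ is a $\Delta$-point of $\mathcal{F}(M)$.
   Context: For a pointed metric space $(M,d)$, ${\mathrm{Lip}}_0(M)$ is the space of Lipschitz $f:M\to\mathbb{R}$ vanishing at the base point, normed by the Lipschitz constant; $\mathcal{F}(M)$ is the closed linear span of the point evaluations $\delta(x)$ in ${\mathrm{Lip}}_0(M)^*$. For $x\ne y$ the molecule is $m_{xy}=(\delta(x)-\delta(y))/d(x,y)\in S_{\mathcal{F}(M)}$. Points $x,y$ are $\varepsilon$-discretely connectable if there are $p_0=x,p_1,\dots,p_{n+1}=y$ in $M$ with $d(p_i,p_{i+1})<\varepsilon$ for all $i$ and $\sum_{i=0}^nd(p_i,p_{i+1})<d(x,y)+\varepsilon$; discretely connectable if this holds for every $\varepsilon>0$. A point $z\in S_X$ of a Banach space is a $\Delta$-point if $\sup_{w\in S}\|z-w\|=2$ for every slice $S=\{w\in B_X:f(w)>1-\alpha\}$ ($f\in S_{X^*}$, $\alpha>0$) of $B_X$ with $z\in S$. *)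

theory Defs
  imports "HOL-Analysis.Analysis"
begin

text \<open>Pointed metric space: the whole type 'a (a metric space) with base point b.  Elements of Lip_0(M)^* are
  represented as functionals on 'a => real that vanish outside Lip_0(M)
  (so that they are determined by their values on Lip_0(M)).\<close>

definition Lip0 :: "'a::metric_space \<Rightarrow> ('a \<Rightarrow> real) set" where
  "Lip0 b = {f. f b = 0 \<and> (\<exists>C. C-lipschitz_on UNIV f)}"

definition Lip0_ball :: "'a::metric_space \<Rightarrow> ('a \<Rightarrow> real) set" where
  "Lip0_ball b = {f. f b = 0 \<and> 1-lipschitz_on UNIV f}"

definition dnorm :: "'a::metric_space \<Rightarrow> (('a \<Rightarrow> real) \<Rightarrow> real) \<Rightarrow> real" where
  "dnorm b \<phi> = Sup {\<bar>\<phi> f\<bar> | f. f \<in> Lip0_ball b}"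

definition Lip0_dual :: "'a::metric_space \<Rightarrow> (('a \<Rightarrow> real) \<Rightarrow> real) set" where
  "Lip0_dual b = {\<phi>. (\<forall>f. f \<notin> Lip0 b \<longrightarrow> \<phi> f = 0)
      \<and> (\<forall>f\<in>Lip0 b. \<forall>g\<in>Lip0 b. \<phi> (\<lambda>x. f x + g x) = \<phi> f + \<phi> g)
      \<and> (\<forall>f\<in>Lip0 b. \<forall>c. \<phi> (\<lambda>x. c * f x) = c * \<phi> f)
      \<and> bdd_above {\<bar>\<phi> f\<bar> | f. f \<in> Lip0_ball b}}"

definition delta :: "'a::metric_space \<Rightarrow> 'a \<Rightarrow> ('a \<Rightarrow> real) \<Rightarrow> real" where
  "delta b x = (\<lambda>f. if f \<in> Lip0 b then f x else 0)"

definition molecule :: "'a::metric_space \<Rightarrow> 'a \<Rightarrow> 'a \<Rightarrow> ('a \<Rightarrow> real) \<Rightarrow> real" where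
  "molecule b x y = (\<lambda>f. (delta b x f - delta b y f) / dist x y)"

definition free_space :: "'a::metric_space \<Rightarrow> (('a \<Rightarrow> real) \<Rightarrow> real) set" where
  "free_space b = {\<mu> \<in> Lip0_dual b. \<forall>\<epsilon>>0. \<exists>n::nat. \<exists>c::nat \<Rightarrow> real. \<exists>x::nat \<Rightarrow> 'a.
       dnorm b (\<lambda>f. \<mu> f - (\<Sum>i<n. c i * delta b (x i) f)) < \<epsilon>}"

definition eps_discretely_connectable :: "real \<Rightarrow> 'a::metric_space \<Rightarrow> 'a \<Rightarrow> bool" where
  "eps_discretely_connectable \<epsilon> x y \<longleftrightarrow>
     (\<exists>(n::nat) (p::nat \<Rightarrow> 'a). p 0 = x \<and> p (Suc n) = y
        \<and> (\<forall>i\<le>n. dist (p i) (p (Suc i)) < \<epsilon>)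
        \<and> (\<Sum>i\<le>n. dist (p i) (p (Suc i))) < dist x y + \<epsilon>)"

definition discretely_connectable :: "'a::metric_space \<Rightarrow> 'a \<Rightarrow> bool" where
  "discretely_connectable x y \<longleftrightarrow> (\<forall>\<epsilon>>0. eps_discretely_connectable \<epsilon> x y)"

definition free_dual_sphere :: "'a::metric_space \<Rightarrow> ((('a \<Rightarrow> real) \<Rightarrow> real) \<Rightarrow> real) set" where
  "free_dual_sphere b = {g.
      (\<forall>u\<in>free_space b. \<forall>v\<in>free_space b. g (\<lambda>f. u f + v f) = g u + g v)
    \<and> (\<forall>u\<in>free_space b. \<forall>c. g (\<lambda>f. c * u f) = c * g u)
    \<and> bdd_above {\<bar>g w\<bar> | w. w \<in> free_space b \<and> dnorm b w \<le> 1}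
    \<and> Sup {\<bar>g w\<bar> | w. w \<in> free_space b \<and> dnorm b w \<le> 1} = 1}"

definition free_slice :: "'a::metric_space \<Rightarrow> ((('a \<Rightarrow> real) \<Rightarrow> real) \<Rightarrow> real) \<Rightarrow> real
     \<Rightarrow> (('a \<Rightarrow> real) \<Rightarrow> real) set" where
  "free_slice b g \<alpha> = {w \<in> free_space b. dnorm b w \<le> 1 \<and> g w > 1 - \<alpha>}"

definition Delta_point :: "'a::metric_space \<Rightarrow> (('a \<Rightarrow> real) \<Rightarrow> real) \<Rightarrow> bool" where
  "Delta_point b z \<longleftrightarrow> z \<in> free_space b \<and> dnorm b z = 1 \<and>
     (\<forall>g\<in>free_dual_sphere b. \<forall>\<alpha>>0. z \<in> free_slice b g \<alpha> \<longrightarrow>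
        Sup {dnorm b (\<lambda>f. z f - w f) | w. w \<in> free_slice b g \<alpha>} = 2)"

end

theory Submission
  imports Defs
begin


abbreviation "bdd b \<phi> \<equiv> bdd_above {\<bar>\<phi> f\<bar> | f. f \<in> Lip0_ball b}"

lemma ball_Lip0: "f \<in> Lip0_ball b \<Longrightarrow> f \<in> Lip0 b"
  unfolding Lip0_ball_def Lip0_def by auto

lemma zero_ball: "(\<lambda>x. 0) \<in> Lip0_ball b"
  unfolding Lip0_ball_def by (auto intro: lipschitz_onI)

lemma ball_diff: "f \<in> Lip0_ball b \<Longrightarrow> \<bar>f x - f y\<bar> \<le> dist x y"
  unfolding Lip0_ball_def using lipschitz_onD[of 1 UNIV f x y] by (auto simp: dist_real_def)

lemma ball_abs: "f \<in> Lip0_ball b \<Longrightarrow> \<bar>f x\<bar> \<le> dist x b"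
  using ball_diff[of f b x b] unfolding Lip0_ball_def by auto

lemma Lip0_add: "f \<in> Lip0 b \<Longrightarrow> g \<in> Lip0 b \<Longrightarrow> (\<lambda>x. f x + g x) \<in> Lip0 b"
  unfolding Lip0_def using lipschitz_on_add by fastforce

lemma Lip0_scale: "f \<in> Lip0 b \<Longrightarrow> (\<lambda>x. c * f x) \<in> Lip0 b"
  unfolding Lip0_def using lipschitz_on_cmult_real by fastforce

lemma ball_neg: "f \<in> Lip0_ball b \<Longrightarrow> (\<lambda>x. - f x) \<in> Lip0_ball b"
  unfolding Lip0_ball_def using lipschitz_on_minus by fastforce

lemma dnorm_ge: "bdd b \<phi> \<Longrightarrow> f \<in> Lip0_ball b \<Longrightarrow> \<bar>\<phi> f\<bar> \<le> dnorm b \<phi>"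
  unfolding dnorm_def by (rule cSup_upper) auto

lemma dnorm_le: "(\<And>f. f \<in> Lip0_ball b \<Longrightarrow> \<bar>\<phi> f\<bar> \<le> C) \<Longrightarrow> dnorm b \<phi> \<le> C"
  unfolding dnorm_def using zero_ball by (intro cSup_least) auto

lemma bdd_I: "(\<And>f. f \<in> Lip0_ball b \<Longrightarrow> \<bar>\<phi> f\<bar> \<le> C) \<Longrightarrow> bdd b \<phi>"
  unfolding bdd_above_def by auto

lemma dnorm_nonneg: "bdd b \<phi> \<Longrightarrow> 0 \<le> dnorm b \<phi>"
proof -
  assume h: "bdd b \<phi>"
  have "\<bar>\<phi> (\<lambda>x. 0)\<bar> \<le> dnorm b \<phi>" by (rule dnorm_ge[OF h zero_ball])
  then show ?thesis by linarith
qed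

lemma dnorm_zero: "dnorm b (\<lambda>f. 0) = 0"
proof -
  have "dnorm b (\<lambda>f. 0) \<le> 0" by (rule dnorm_le) auto
  moreover have "0 \<le> dnorm b (\<lambda>f. 0)" by (rule dnorm_nonneg, rule bdd_I[where C=0]) auto
  ultimately show ?thesis by simp
qed

lemma dual_bdd: "\<phi> \<in> Lip0_dual b \<Longrightarrow> bdd b \<phi>"
  unfolding Lip0_dual_def by auto

lemma dual_add: "u \<in> Lip0_dual b \<Longrightarrow> v \<in> Lip0_dual b \<Longrightarrow> (\<lambda>f. u f + v f) \<in> Lip0_dual b"
proof -
  assume u: "u \<in> Lip0_dual b" and v: "v \<in> Lip0_dual b"
  have "\<bar>u f + v f\<bar> \<le> dnorm b u + dnorm b v" if "f \<in> Lip0_ball b" for f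
    using dnorm_ge[OF dual_bdd[OF u] that] dnorm_ge[OF dual_bdd[OF v] that] by linarith
  hence "bdd b (\<lambda>f. u f + v f)" by (rule bdd_I)
  with u v show ?thesis unfolding Lip0_dual_def by (auto simp: algebra_simps)
qed

lemma dual_scale: "u \<in> Lip0_dual b \<Longrightarrow> (\<lambda>f. c * u f) \<in> Lip0_dual b"
proof -
  assume u: "u \<in> Lip0_dual b"
  have "\<bar>c * u f\<bar> \<le> \<bar>c\<bar> * dnorm b u" if "f \<in> Lip0_ball b" for f
    using dnorm_ge[OF dual_bdd[OF u] that] by (simp add: abs_mult mult_left_mono)
  hence "bdd b (\<lambda>f. c * u f)" by (rule bdd_I)
  with u show ?thesis unfolding Lip0_dual_def by (auto simp: algebra_simps)
qed

lemma dual_zero: "(\<lambda>f. 0) \<in> Lip0_dual b"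
  unfolding Lip0_dual_def by (auto intro: bdd_I[of b _ 0])

lemma dual_diff: "u \<in> Lip0_dual b \<Longrightarrow> v \<in> Lip0_dual b \<Longrightarrow> (\<lambda>f. u f - v f) \<in> Lip0_dual b"
  using dual_add[OF _ dual_scale[of v b "-1"], of u] by simp

lemma dual_sum: "finite I \<Longrightarrow> (\<forall>i\<in>I. w i \<in> Lip0_dual b) \<Longrightarrow> (\<lambda>f. \<Sum>i\<in>I. c i * w i f) \<in> Lip0_dual b"
proof (induction I rule: finite_induct)
  case empty then show ?case using dual_zero by simp
next
  case (insert j I)
  then show ?case using dual_add[OF dual_scale[of "w j" b "c j"], of "\<lambda>f. \<Sum>i\<in>I. c i * w i f"] by simp
qed

lemma delta_dual: "delta b x \<in> Lip0_dual b"
proof -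
  have "\<bar>delta b x f\<bar> \<le> dist x b" if "f \<in> Lip0_ball b" for f
    using ball_abs[OF that] ball_Lip0[OF that] by (simp add: delta_def)
  hence "bdd b (delta b x)" by (rule bdd_I)
  moreover have "\<forall>f\<in>Lip0 b. \<forall>g\<in>Lip0 b. delta b x (\<lambda>x. f x + g x) = delta b x f + delta b x g"
    using Lip0_add by (auto simp: delta_def)
  moreover have "\<forall>f\<in>Lip0 b. \<forall>c. delta b x (\<lambda>x. c * f x) = c * delta b x f"
    using Lip0_scale by (auto simp: delta_def)
  ultimately show ?thesis unfolding Lip0_dual_def by (auto simp: delta_def)
qed

lemma molecule_eq: "molecule b x y = (\<lambda>f. (1 / dist x y) * delta b x f + (-1 / dist x y) * delta b y f)"
  unfolding molecule_def by (rule ext) (simp add: diff_divide_distrib)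

lemma molecule_dual: "molecule b x y \<in> Lip0_dual b"
  unfolding molecule_eq by (intro dual_add dual_scale delta_dual)

lemma molecule_bound: "f \<in> Lip0_ball b \<Longrightarrow> \<bar>molecule b x y f\<bar> \<le> 1"
  using ball_diff[of f b x y] ball_Lip0[of f b]
  by (cases "x = y") (auto simp: molecule_def delta_def divide_le_eq_1 abs_divide)

lemma molecule_dnorm: "dnorm b (molecule b x y) \<le> 1"
  by (rule dnorm_le[OF molecule_bound])

lemma molecule_swap: "molecule b y x = (\<lambda>f. - molecule b x y f)"
  unfolding molecule_def by (rule ext) (simp add: dist_commute minus_divide_left)



lemma dnorm_add_le: assumes "bdd b u" "bdd b v" shows "dnorm b (\<lambda>f. u f + v f) \<le> dnorm b u + dnorm b v"
proof (rule dnorm_le)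
  fix f assume f: "f \<in> Lip0_ball b"
  have "\<bar>u f + v f\<bar> \<le> \<bar>u f\<bar> + \<bar>v f\<bar>" by (rule abs_triangle_ineq)
  then show "\<bar>u f + v f\<bar> \<le> dnorm b u + dnorm b v" using dnorm_ge[OF assms(1) f] dnorm_ge[OF assms(2) f] by linarith
qed

lemma dnorm_scale_le: "bdd b u \<Longrightarrow> dnorm b (\<lambda>f. c * u f) \<le> \<bar>c\<bar> * dnorm b u"
  by (rule dnorm_le) (simp add: abs_mult dnorm_ge mult_left_mono)

lemma fs_dual: "\<mu> \<in> free_space b \<Longrightarrow> \<mu> \<in> Lip0_dual b"
  unfolding free_space_def by auto

lemma approx_dual: "(\<lambda>f. \<Sum>i<(n::nat). c i * delta b (x i) f) \<in> Lip0_dual b"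
  by (intro dual_sum) (simp_all add: delta_dual)

lemma fs_bdd: "\<mu> \<in> free_space b \<Longrightarrow> bdd b \<mu>"
  by (simp add: fs_dual dual_bdd)

lemma sum_concat: "(\<Sum>i<p+(q::nat). (if i<p then F i else G (i-p))) = (\<Sum>i<p. F i) + (\<Sum>i<q. (G i::real))"
proof (induction q)
  case 0 then show ?case by (auto intro: sum.cong)
next
  case (Suc q) then show ?case by simp
qed

lemma fs_add: fixes b :: "'a::metric_space" assumes u: "u \<in> free_space b" and v: "v \<in> free_space b"
  shows "(\<lambda>f. u f + v f) \<in> free_space b"
proof -
  have "\<exists>n c (x::nat\<Rightarrow>'a). dnorm b (\<lambda>f. u f + v f - (\<Sum>i<n. c i * delta b (x i) f)) < \<epsilon>" if e: "\<epsilon> > 0" for \<epsilon>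
  proof -
    have e2: "\<epsilon>/2 > 0" using e by simp
    from u have U: "\<forall>\<epsilon>>0. \<exists>n c (x::nat\<Rightarrow>'a). dnorm b (\<lambda>f. u f - (\<Sum>i<n. c i * delta b (x i) f)) < \<epsilon>"
      by (simp add: free_space_def)
    from v have V: "\<forall>\<epsilon>>0. \<exists>n c (x::nat\<Rightarrow>'a). dnorm b (\<lambda>f. v f - (\<Sum>i<n. c i * delta b (x i) f)) < \<epsilon>"
      by (simp add: free_space_def)
    from U e2 obtain n1 c1 and x1 :: "nat \<Rightarrow> 'a" where 1: "dnorm b (\<lambda>f. u f - (\<Sum>i<n1. c1 i * delta b (x1 i) f)) < \<epsilon>/2"
      by blast
    from V e2 obtain n2 c2 and x2 :: "nat \<Rightarrow> 'a" where 2: "dnorm b (\<lambda>f. v f - (\<Sum>i<n2. c2 i * delta b (x2 i) f)) < \<epsilon>/2"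
      by blast
    define c where "c i = (if i<n1 then c1 i else c2 (i-n1))" for i
    define x where "x i = (if i<n1 then x1 i else x2 (i-n1))" for i
    have eq: "(\<Sum>i<n1+n2. c i * delta b (x i) f) = (\<Sum>i<n1. c1 i * delta b (x1 i) f) + (\<Sum>i<n2. c2 i * delta b (x2 i) f)" for f
    proof -
      have "(\<Sum>i<n1+n2. c i * delta b (x i) f) = (\<Sum>i<n1+n2. (if i<n1 then c1 i * delta b (x1 i) f else c2 (i-n1) * delta b (x2 (i-n1)) f))"
        by (rule sum.cong) (auto simp: c_def x_def)
      then show ?thesis using sum_concat[where p=n1 and q=n2 and F="\<lambda>i. c1 i * delta b (x1 i) f" and G="\<lambda>i. c2 i * delta b (x2 i) f"] by simp
    qed
    have b1: "bdd b (\<lambda>f. u f - (\<Sum>i<n1. c1 i * delta b (x1 i) f))"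
      by (intro dual_bdd dual_diff fs_dual u approx_dual)
    have b2: "bdd b (\<lambda>f. v f - (\<Sum>i<n2. c2 i * delta b (x2 i) f))"
      by (intro dual_bdd dual_diff fs_dual v approx_dual)
    have "(\<lambda>f. u f + v f - (\<Sum>i<n1+n2. c i * delta b (x i) f)) =
       (\<lambda>f. (u f - (\<Sum>i<n1. c1 i * delta b (x1 i) f)) + (v f - (\<Sum>i<n2. c2 i * delta b (x2 i) f)))"
      using eq by (simp add: algebra_simps)
    hence "dnorm b (\<lambda>f. u f + v f - (\<Sum>i<n1+n2. c i * delta b (x i) f)) < \<epsilon>"
      using dnorm_add_le[OF b1 b2] 1 2 by simp
    note * = this
    show ?thesis
      apply (rule exI[where x="n1+n2"]) apply (rule exI[where x=c]) apply (rule exI[where x=x]) using * by simp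
  qed
  moreover have "(\<lambda>f. u f + v f) \<in> Lip0_dual b" by (intro dual_add fs_dual u v)
  ultimately show ?thesis unfolding free_space_def by blast
qed

lemma fs_scale: fixes b :: "'a::metric_space" assumes u: "u \<in> free_space b"
  shows "(\<lambda>f. k * u f) \<in> free_space b"
proof -
  have "\<exists>n c (x::nat\<Rightarrow>'a). dnorm b (\<lambda>f. k * u f - (\<Sum>i<n. c i * delta b (x i) f)) < \<epsilon>" if e: "\<epsilon> > 0" for \<epsilon>
  proof -
    have "\<epsilon> / (\<bar>k\<bar>+1) > 0" using e by simp
    from u have U: "\<forall>\<epsilon>>0. \<exists>n c (x::nat\<Rightarrow>'a). dnorm b (\<lambda>f. u f - (\<Sum>i<n. c i * delta b (x i) f)) < \<epsilon>"
      by (simp add: free_space_def)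
    from U \<open>\<epsilon> / (\<bar>k\<bar>+1) > 0\<close> obtain n c and x :: "nat \<Rightarrow> 'a" where 1: "dnorm b (\<lambda>f. u f - (\<Sum>i<n. c i * delta b (x i) f)) < \<epsilon> / (\<bar>k\<bar>+1)"
      by blast
    have b1: "bdd b (\<lambda>f. u f - (\<Sum>i<n. c i * delta b (x i) f))"
      by (intro dual_bdd dual_diff fs_dual u approx_dual)
    have "(\<lambda>f. k * u f - (\<Sum>i<n. (k * c i) * delta b (x i) f)) = (\<lambda>f. k * (u f - (\<Sum>i<n. c i * delta b (x i) f)))"
      by (auto simp: algebra_simps sum_distrib_left)
    moreover have "\<bar>k\<bar> * dnorm b (\<lambda>f. u f - (\<Sum>i<n. c i * delta b (x i) f)) < \<epsilon>"
    proof -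
      have "\<bar>k\<bar> * dnorm b (\<lambda>f. u f - (\<Sum>i<n. c i * delta b (x i) f)) \<le> \<bar>k\<bar> * (\<epsilon> / (\<bar>k\<bar>+1))"
        using 1 by (intro mult_left_mono) auto
      also have "\<dots> < \<epsilon>" using e by (simp add: field_simps)
      finally show ?thesis .
    qed
    ultimately have "dnorm b (\<lambda>f. k * u f - (\<Sum>i<n. (k * c i) * delta b (x i) f)) < \<epsilon>"
      using dnorm_scale_le[OF b1, of k] by simp
    note * = this
    show ?thesis
      apply (rule exI[where x=n]) apply (rule exI[where x="\<lambda>i. k * c i"]) apply (rule exI[where x=x]) using * by simp
  qed
  moreover have "(\<lambda>f. k * u f) \<in> Lip0_dual b" by (intro dual_scale fs_dual u)
  ultimately show ?thesis unfolding free_space_def by blast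
qed

lemma fs_zero: "(\<lambda>f. 0) \<in> free_space b"
  unfolding free_space_def using dual_zero[of b] dnorm_zero[of b]
  by (auto intro!: exI[of _ 0])

lemma fs_diff: "u \<in> free_space b \<Longrightarrow> v \<in> free_space b \<Longrightarrow> (\<lambda>f. u f - v f) \<in> free_space b"
  using fs_add[OF _ fs_scale[of v b "-1"], of u] by simp

lemma fs_sum: "finite I \<Longrightarrow> (\<forall>i\<in>I. w i \<in> free_space b) \<Longrightarrow> (\<lambda>f. \<Sum>i\<in>I. c i * w i f) \<in> free_space b"
proof (induction I rule: finite_induct)
  case empty then show ?case using fs_zero by simp
next
  case (insert j I)
  then show ?case using fs_add[OF fs_scale[of "w j" b "c j"], of "\<lambda>f. \<Sum>i\<in>I. c i * w i f"] by simp
qed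

lemma delta_fs: "delta b x \<in> free_space b"
proof -
  have "dnorm b (\<lambda>f. delta b x f - (\<Sum>i<(1::nat). (\<lambda>i. 1) i * delta b ((\<lambda>i. x) i) f)) = 0"
    using dnorm_zero by (simp add: card_lessThan)
  then show ?thesis unfolding free_space_def using delta_dual
    by (auto intro!: exI[where x="1::nat"] exI[where x="\<lambda>i. 1::real"] exI[where x="\<lambda>i. x"])
qed

lemma molecule_fs: "molecule b x y \<in> free_space b"
  unfolding molecule_eq by (intro fs_add fs_scale delta_fs)



context
  fixes b :: "'a::metric_space" and g
  assumes g: "g \<in> free_dual_sphere b"
begin

lemma g_add: "u \<in> free_space b \<Longrightarrow> v \<in> free_space b \<Longrightarrow> g (\<lambda>f. u f + v f) = g u + g v"
  using g unfolding free_dual_sphere_def by blast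

lemma g_scale: "u \<in> free_space b \<Longrightarrow> g (\<lambda>f. c * u f) = c * g u"
  using g unfolding free_dual_sphere_def by blast

lemma g_zero: "g (\<lambda>f. 0) = 0"
  using g_scale[OF fs_zero, of 0] by simp

lemma g_diff: "u \<in> free_space b \<Longrightarrow> v \<in> free_space b \<Longrightarrow> g (\<lambda>f. u f - v f) = g u - g v"
  using g_add[OF _ fs_scale[of v b "-1"], of u] g_scale[of v "-1"] by simp

lemma g_sum: "finite I \<Longrightarrow> (\<forall>i\<in>I. w i \<in> free_space b) \<Longrightarrow> g (\<lambda>f. \<Sum>i\<in>I. c i * w i f) = (\<Sum>i\<in>I. c i * g (w i))"
proof (induction I rule: finite_induct)
  case empty then show ?case using g_zero by simp
next
  case (insert j I)
  have "g (\<lambda>f. \<Sum>i\<in>insert j I. c i * w i f) = g (\<lambda>f. (\<lambda>f. c j * w j f) f + (\<lambda>f. \<Sum>i\<in>I. c i * w i f) f)"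
    using insert by simp
  also have "\<dots> = c j * g (w j) + g (\<lambda>f. \<Sum>i\<in>I. c i * w i f)"
    using insert by (subst g_add) (auto intro: fs_scale fs_sum g_scale)
  finally show ?case using insert by simp
qed

lemma g_unit: "w \<in> free_space b \<Longrightarrow> dnorm b w \<le> 1 \<Longrightarrow> \<bar>g w\<bar> \<le> 1"
proof -
  assume w: "w \<in> free_space b" "dnorm b w \<le> 1"
  have "\<bar>g w\<bar> \<le> Sup {\<bar>g w\<bar> | w. w \<in> free_space b \<and> dnorm b w \<le> 1}"
    using g w unfolding free_dual_sphere_def by (intro cSup_upper) auto
  also have "\<dots> = 1" using g unfolding free_dual_sphere_def by blast
  finally show ?thesis .
qed

lemma g_le: assumes w: "w \<in> free_space b" shows "\<bar>g w\<bar> \<le> dnorm b w"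
proof -
  have bw: "bdd b w" using fs_bdd[OF w] .
  have d0: "0 \<le> dnorm b w" using dnorm_nonneg[OF bw] .
  show ?thesis
  proof (cases "dnorm b w = 0")
    case True
    show ?thesis
    proof (rule ccontr)
      assume "\<not> ?thesis"
      hence ne: "g w \<noteq> 0" using True by simp
      define t where "t = 2 / g w"
      have "dnorm b (\<lambda>f. t * w f) \<le> \<bar>t\<bar> * dnorm b w" by (rule dnorm_scale_le[OF bw])
      hence "dnorm b (\<lambda>f. t * w f) \<le> 1" using True by simp
      hence "\<bar>g (\<lambda>f. t * w f)\<bar> \<le> 1" using g_unit fs_scale[OF w] by blast
      moreover have "g (\<lambda>f. t * w f) = t * g w" by (rule g_scale[OF w])
      moreover have "t * g w = 2" using ne by (simp add: t_def)
      ultimately show False by simp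
    qed
  next
    case False
    hence pos: "dnorm b w > 0" using d0 by simp
    define t where "t = 1 / dnorm b w"
    have "dnorm b (\<lambda>f. t * w f) \<le> \<bar>t\<bar> * dnorm b w" by (rule dnorm_scale_le[OF bw])
    hence "dnorm b (\<lambda>f. t * w f) \<le> 1" using pos by (simp add: t_def)
    hence "\<bar>g (\<lambda>f. t * w f)\<bar> \<le> 1" using g_unit fs_scale[OF w] by blast
    moreover have "g (\<lambda>f. t * w f) = t * g w" by (rule g_scale[OF w])
    ultimately have "\<bar>g w\<bar> / dnorm b w \<le> 1" using pos by (simp add: t_def abs_mult)
    then show ?thesis using pos by (simp add: divide_le_eq_1)
  qed
qed

end



lemma max_lip: "\<bar>max (a::real) b - max c d\<bar> \<le> max \<bar>a - c\<bar> \<bar>b - d\<bar>"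
  by (simp add: max_def abs_le_iff) linarith

lemma exists_norming:
  fixes b :: "'a::metric_space"
  assumes mu: "\<mu> \<in> free_space b" and n1: "dnorm b \<mu> = 1" and e: "\<epsilon> > 0"
  shows "\<exists>f\<in>Lip0_ball b. \<mu> f > 1 - \<epsilon>"
proof -
  have bdd: "bdd b \<mu>" by (rule fs_bdd[OF mu])
  have "1 - \<epsilon> < Sup {\<bar>\<mu> f\<bar> | f. f \<in> Lip0_ball b}" using n1 e unfolding dnorm_def by simp
  moreover have "{\<bar>\<mu> f\<bar> | f. f \<in> Lip0_ball b} \<noteq> {}" using zero_ball by blast
  ultimately obtain f0 where f0: "f0 \<in> Lip0_ball b" "1 - \<epsilon> < \<bar>\<mu> f0\<bar>"
    using less_cSup_iff[OF _ bdd] by force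
  show ?thesis
  proof (cases "\<mu> f0 \<ge> 0")
    case True then show ?thesis using f0 by auto
  next
    case False
    have "\<mu> (\<lambda>x. (-1) * f0 x) = (-1) * \<mu> f0"
      using fs_dual[OF mu] ball_Lip0[OF f0(1)] unfolding Lip0_dual_def by blast
    hence "\<mu> (\<lambda>x. - f0 x) = - \<mu> f0" by simp
    then show ?thesis using f0 False ball_neg[OF f0(1)] by (intro bexI[of _ "\<lambda>x. - f0 x"]) auto
  qed
qed

lemma far_molecule:
  fixes b :: "'a::metric_space"
  assumes mu: "\<mu> \<in> free_space b" and n1: "dnorm b \<mu> = 1" and e: "\<epsilon> > 0"
  shows "\<exists>\<delta>>0. \<forall>u v. u \<noteq> v \<longrightarrow> dist u v < \<delta> \<longrightarrow> dnorm b (\<lambda>f. \<mu> f - molecule b u v f) > 2 - \<epsilon>"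
proof -
  have e4: "\<epsilon>/4 > 0" using e by simp
  obtain f where f: "f \<in> Lip0_ball b" "\<mu> f > 1 - \<epsilon>/4"
    using exists_norming[OF mu n1 e4] by blast
  from mu have U: "\<forall>\<epsilon>>0. \<exists>n c (x::nat\<Rightarrow>'a). dnorm b (\<lambda>f. \<mu> f - (\<Sum>i<n. c i * delta b (x i) f)) < \<epsilon>"
    by (simp add: free_space_def)
  from U e4 obtain n c and x :: "nat \<Rightarrow> 'a" where
    nu: "dnorm b (\<lambda>f. \<mu> f - (\<Sum>i<n. c i * delta b (x i) f)) < \<epsilon>/4" by blast
  define C where "C = (\<Sum>i<n. \<bar>c i\<bar>)"
  have C0: "C \<ge> 0" unfolding C_def by (simp add: sum_nonneg)
  define \<delta> where "\<delta> = \<epsilon> / (8 * (C + 1))"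
  have dpos: "\<delta> > 0" using e C0 by (simp add: \<delta>_def)
  have dC: "2 * \<delta> * C < \<epsilon>/4"
  proof -
    have "2 * \<delta> * C = (\<epsilon>/4) * (C / (C+1))" using C0 by (simp add: \<delta>_def field_simps)
    also have "\<dots> < \<epsilon>/4" using C0 e by (simp add: field_simps)
    finally show ?thesis .
  qed
  have bnu: "bdd b (\<lambda>f. \<mu> f - (\<Sum>i<n. c i * delta b (x i) f))"
    by (intro dual_bdd dual_diff fs_dual mu approx_dual)
  have fL: "f \<in> Lip0 b" using ball_Lip0[OF f(1)] .
  have flip: "\<bar>f p - f q\<bar> \<le> dist p q" for p q using ball_diff[OF f(1)] .
  have fb: "f b = 0" using f(1) unfolding Lip0_ball_def by simp
  have "dnorm b (\<lambda>f. \<mu> f - molecule b u v f) > 2 - \<epsilon>" if uv: "u \<noteq> v" "dist u v < \<delta>" for u v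
  proof -
    define d where "d = dist u v"
    have dp: "d > 0" using uv by (simp add: d_def)
    define h where "h y = max (f y) (f u + d - dist y v)" for y
    define h' where "h' y = h y - h b" for y
    have hlip: "\<bar>h p - h q\<bar> \<le> dist p q" for p q
    proof -
      have "\<bar>h p - h q\<bar> \<le> max \<bar>f p - f q\<bar> \<bar>(f u + d - dist p v) - (f u + d - dist q v)\<bar>"
        unfolding h_def by (rule max_lip)
      moreover have "\<bar>(f u + d - dist p v) - (f u + d - dist q v)\<bar> \<le> dist p q"
        using dist_triangle[of p v q] dist_triangle[of q v p] by (simp add: dist_commute abs_le_iff)
      ultimately show ?thesis using flip[of p q] by simp
    qed
    have h'ball: "h' \<in> Lip0_ball b"
      unfolding Lip0_ball_def
    proof (intro CollectI conjI)
      show "h' b = 0" by (simp add: h'_def)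
      show "1-lipschitz_on UNIV h'"
        by (rule lipschitz_onI) (use hlip in \<open>auto simp: h'_def dist_real_def\<close>)
    qed
    have h'L: "h' \<in> Lip0 b" using ball_Lip0[OF h'ball] .
    have hf: "0 \<le> h y - f y \<and> h y - f y \<le> 2 * d" for y
    proof -
      have "f u - f y \<le> dist u y" using flip[of u y] by simp
      moreover have "dist u y \<le> d + dist y v" using dist_triangle[of u y v] by (simp add: d_def dist_commute)
      ultimately show ?thesis unfolding h_def using dp by (simp add: max_def)
    qed
    have hu: "h u = f u" unfolding h_def d_def by simp
    have hv: "h v = f u + d"
    proof -
      have "f v \<le> f u + d" using flip[of v u] by (simp add: d_def dist_commute abs_le_iff)
      then show ?thesis unfolding h_def by simp
    qed
    have mol: "molecule b u v h' = -1"
      unfolding molecule_def delta_def using h'L dp by (simp add: h'_def hu hv d_def[symmetric])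
    have diffx: "\<bar>h' y - f y\<bar> \<le> 2 * d" for y
      using hf[of y] hf[of b] fb by (simp add: h'_def abs_le_iff)
    have "\<bar>(\<Sum>i<n. c i * delta b (x i) h') - (\<Sum>i<n. c i * delta b (x i) f)\<bar> = \<bar>\<Sum>i<n. c i * (h' (x i) - f (x i))\<bar>"
      using h'L fL by (simp add: delta_def sum_subtractf[symmetric] algebra_simps)
    also have "\<dots> \<le> (\<Sum>i<n. \<bar>c i * (h' (x i) - f (x i))\<bar>)" by (rule sum_abs)
    also have "\<dots> \<le> (\<Sum>i<n. \<bar>c i\<bar> * (2 * d))"
      by (intro sum_mono) (simp add: abs_mult diffx mult_left_mono)
    also have "\<dots> = 2 * d * C" by (simp add: C_def sum_distrib_left sum_distrib_right mult.commute mult.left_commute)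
    also have "\<dots> \<le> 2 * \<delta> * C" using uv C0 by (simp add: d_def mult_right_mono)
    finally have s1: "\<bar>(\<Sum>i<n. c i * delta b (x i) h') - (\<Sum>i<n. c i * delta b (x i) f)\<bar> < \<epsilon>/4"
      using dC by linarith
    have s2: "\<bar>\<mu> h' - (\<Sum>i<n. c i * delta b (x i) h')\<bar> < \<epsilon>/4"
      using dnorm_ge[OF bnu h'ball] nu by simp
    have s3: "\<bar>\<mu> f - (\<Sum>i<n. c i * delta b (x i) f)\<bar> < \<epsilon>/4"
      using dnorm_ge[OF bnu f(1)] nu by simp
    have muh: "\<mu> h' > 1 - \<epsilon>" using s1 s2 s3 f(2) unfolding abs_less_iff by linarith
    have bm: "bdd b (\<lambda>f. \<mu> f - molecule b u v f)"
      by (intro dual_bdd dual_diff fs_dual mu molecule_dual)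
    have "\<bar>\<mu> h' - molecule b u v h'\<bar> \<le> dnorm b (\<lambda>f. \<mu> f - molecule b u v f)"
      using dnorm_ge[OF bm h'ball] by simp
    then show ?thesis using muh mol by simp
  qed
  then show ?thesis using dpos by blast
qed



lemma avg:
  fixes w v :: "'i \<Rightarrow> real"
  assumes "finite I" "\<forall>i\<in>I. 0 \<le> w i" "1 - \<eta>/2 \<le> sum w I" "sum w I \<le> 1 + \<eta>"
    "-2 \<le> t" "t \<le> 1" "0 \<le> \<eta>" "t + \<eta> < (\<Sum>i\<in>I. w i * v i)"
  shows "\<exists>i\<in>I. 0 < w i \<and> t < v i"
proof (rule ccontr)
  assume na: "\<not> ?thesis"
  have "w i * v i \<le> w i * t" if i: "i \<in> I" for i
  proof (cases "w i = 0")
    case False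
    have "0 \<le> w i" using assms(2) i by blast
    with False have "0 < w i" by simp
    hence "v i \<le> t" using na i by (meson not_le)
    then show ?thesis using assms(2) i by (simp add: mult_left_mono)
  qed simp
  hence "(\<Sum>i\<in>I. w i * v i) \<le> (\<Sum>i\<in>I. w i * t)" by (intro sum_mono) auto
  also have "\<dots> = t * sum w I" by (simp add: sum_distrib_left mult_ac)
  also have "\<dots> \<le> t + \<eta>"
  proof (cases "t \<ge> 0")
    case True
    have "t * sum w I \<le> t * (1 + \<eta>)" using True assms(4) by (simp add: mult_left_mono)
    moreover have "t * \<eta> \<le> \<eta>" using True assms(6,7) by (simp add: mult_left_le_one_le)
    ultimately show ?thesis by (simp add: algebra_simps)
  next
    case False
    have "t * sum w I \<le> t * (1 - \<eta>/2)" using False assms(3) by (intro mult_left_mono_neg) auto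
    moreover have "-t * \<eta> \<le> 2 * \<eta>" using mult_right_mono[of "-t" 2 \<eta>] assms(5,7) by simp
    ultimately show ?thesis by (simp add: algebra_simps)
  qed
  finally show False using assms(8) by simp
qed

lemma chain_dist: "dist (p 0) (p (Suc m)) \<le> (\<Sum>i\<le>m. dist (p i) (p (Suc i)))"
proof (induction m)
  case 0 then show ?case by simp
next
  case (Suc m)
  have "dist (p 0) (p (Suc (Suc m))) \<le> dist (p 0) (p (Suc m)) + dist (p (Suc m)) (p (Suc (Suc m)))"
    by (rule dist_triangle)
  then show ?case using Suc by simp
qed

lemma chain_step:
  fixes b :: "'a::metric_space"
  assumes g: "g \<in> free_dual_sphere b" and xy: "x \<noteq> y" and dc: "discretely_connectable x y"
    and dpos: "\<delta> > 0" and gpos: "\<gamma> > 0" and tt: "-2 \<le> tt" "tt \<le> 1"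
    and gs: "g (\<lambda>f. s * molecule b x y f) > tt + \<gamma>"
  shows "\<exists>u v. u \<noteq> v \<and> dist u v < \<delta> \<and> g (\<lambda>f. s * molecule b u v f) > tt"
proof -
  define d where "d = dist x y"
  have d0: "d > 0" using xy by (simp add: d_def)
  have ep: "min \<delta> (d * \<gamma>) > 0" using dpos d0 gpos by simp
  obtain n and p :: "nat \<Rightarrow> 'a" where p: "p 0 = x" "p (Suc n) = y"
    "\<forall>i\<le>n. dist (p i) (p (Suc i)) < min \<delta> (d * \<gamma>)"
    "(\<Sum>i\<le>n. dist (p i) (p (Suc i))) < dist x y + min \<delta> (d * \<gamma>)"
    using dc ep unfolding discretely_connectable_def eps_discretely_connectable_def by blast
  define lam where "lam i = dist (p i) (p (Suc i)) / d" for i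
  define m where "m i = (\<lambda>f. s * molecule b (p i) (p (Suc i)) f)" for i
  have ident: "(\<lambda>f. s * molecule b x y f) = (\<lambda>f. \<Sum>i\<le>n. lam i * m i f)"
  proof (rule ext)
    fix f
    show "s * molecule b x y f = (\<Sum>i\<le>n. lam i * m i f)"
    proof (cases "f \<in> Lip0 b")
      case False then show ?thesis by (simp add: m_def molecule_def delta_def)
    next
      case True
      have tm: "lam i * m i f = s * ((f (p i) - f (p (Suc i))) / d)" for i
      proof (cases "p i = p (Suc i)")
        case True then show ?thesis by (simp add: lam_def m_def molecule_def)
      next
        case False
        hence "dist (p i) (p (Suc i)) > 0" by simp
        then show ?thesis using True d0 by (simp add: lam_def m_def molecule_def delta_def field_simps)
      qed
      have "(\<Sum>i\<le>n. lam i * m i f) = (\<Sum>i\<le>n. s / d * (f (p i) - f (p (Suc i))))"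
        using tm by (intro sum.cong) auto
      also have "\<dots> = s / d * (\<Sum>i\<le>n. f (p i) - f (p (Suc i)))" by (simp add: sum_distrib_left)
      also have "\<dots> = s / d * (f (p 0) - f (p (Suc n)))"
        using sum_telescope[of "\<lambda>i. f (p i)" n] by simp
      finally show ?thesis using True p(1,2) by (simp add: molecule_def delta_def d_def)
    qed
  qed
  have mfs: "\<forall>i\<in>{..n}. m i \<in> free_space b" unfolding m_def by (auto intro: fs_scale molecule_fs)
  have gsum: "g (\<lambda>f. s * molecule b x y f) = (\<Sum>i\<le>n. lam i * g (m i))"
    unfolding ident by (rule g_sum[OF g finite_atMost mfs])
  have sl: "sum lam {..n} = (\<Sum>i\<le>n. dist (p i) (p (Suc i))) / d"
    unfolding lam_def by (simp add: sum_divide_distrib)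
  have low: "1 \<le> sum lam {..n}"
    using chain_dist[of p n] p(1,2) d0 unfolding sl by (simp add: d_def)
  have up: "sum lam {..n} \<le> 1 + \<gamma>"
  proof -
    have "(\<Sum>i\<le>n. dist (p i) (p (Suc i))) \<le> d + d * \<gamma>" using p(4) by (simp add: d_def)
    then show ?thesis unfolding sl using d0 by (simp add: field_simps)
  qed
  have "\<exists>i\<in>{..n}. 0 < lam i \<and> tt < g (m i)"
    by (rule avg[where \<eta>=\<gamma>]) (use low up tt gpos gs gsum in \<open>auto simp: lam_def d0 less_imp_le\<close>)
  then obtain i where i: "i \<le> n" "0 < lam i" "tt < g (m i)" by auto
  have "p i \<noteq> p (Suc i)" using i(2) by (auto simp: lam_def)
  moreover have "dist (p i) (p (Suc i)) < \<delta>" using p(3) i(1) by simp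
  ultimately show ?thesis using i(3) unfolding m_def by blast
qed



lemma series_step:
  fixes b :: "'a::metric_space" and \<mu> :: "('a \<Rightarrow> real) \<Rightarrow> real"
  assumes g: "g \<in> free_dual_sphere b" and mu: "\<mu> \<in> free_space b" and n1: "dnorm b \<mu> = 1"
    and H: "\<forall>\<eta>>0. \<exists>(a::nat \<Rightarrow> real) (x::nat \<Rightarrow> 'a) (y::nat \<Rightarrow> 'a).
           (\<forall>k. x k \<noteq> y k) \<and> summable (\<lambda>k. \<bar>a k\<bar>) \<and> (\<Sum>k. \<bar>a k\<bar>) < 1 + \<eta>
         \<and> (\<lambda>n. dnorm b (\<lambda>f. \<mu> f - (\<Sum>k<n. a k * molecule b (x k) (y k) f))) \<longlonglongrightarrow> 0
         \<and> (\<forall>k. discretely_connectable (x k) (y k))"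
    and gpos: "\<gamma> > 0" and tt: "-2 \<le> tt" and gm: "g \<mu> > tt + 3 * \<gamma>"
  shows "\<exists>x y s. x \<noteq> y \<and> discretely_connectable x y \<and> (s = 1 \<or> s = -1) \<and> g (\<lambda>f. s * molecule b x y f) > tt + \<gamma>"
proof -
  obtain a and x y :: "nat \<Rightarrow> 'a" where A:
    "\<forall>k. x k \<noteq> y k" "summable (\<lambda>k. \<bar>a k\<bar>)" "(\<Sum>k. \<bar>a k\<bar>) < 1 + \<gamma>"
    "(\<lambda>n. dnorm b (\<lambda>f. \<mu> f - (\<Sum>k<n. a k * molecule b (x k) (y k) f))) \<longlonglongrightarrow> 0"
    "\<forall>k. discretely_connectable (x k) (y k)"
    using H gpos by blast
  have "\<gamma>/2 > 0" using gpos by simp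
  from LIMSEQ_D[OF A(4) this] obtain N where
    "norm (dnorm b (\<lambda>f. \<mu> f - (\<Sum>k<N. a k * molecule b (x k) (y k) f)) - 0) < \<gamma>/2" by blast
  hence dS0: "\<bar>dnorm b (\<lambda>f. \<mu> f - (\<Sum>k<N. a k * molecule b (x k) (y k) f))\<bar> < \<gamma>/2" by simp
  define S where "S = (\<lambda>f. \<Sum>k<N. a k * molecule b (x k) (y k) f)"
  have dS: "dnorm b (\<lambda>f. \<mu> f - S f) < \<gamma>/2" using dS0 unfolding S_def by simp
  have Sfs: "S \<in> free_space b" unfolding S_def by (intro fs_sum) (auto intro: molecule_fs)
  have gS: "g S = (\<Sum>k<N. a k * g (molecule b (x k) (y k)))"
    unfolding S_def by (rule g_sum[OF g]) (auto intro: molecule_fs)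
  have bmS: "bdd b (\<lambda>f. \<mu> f - S f)" by (intro dual_bdd dual_diff fs_dual mu Sfs)
  have "\<bar>g (\<lambda>f. \<mu> f - S f)\<bar> \<le> dnorm b (\<lambda>f. \<mu> f - S f)"
    by (rule g_le[OF g fs_diff[OF mu Sfs]])
  moreover have "g (\<lambda>f. \<mu> f - S f) = g \<mu> - g S" by (rule g_diff[OF g mu Sfs])
  ultimately have gSl: "g S > g \<mu> - \<gamma>/2" using dS by (simp add: abs_le_iff)
  have gmu1: "g \<mu> \<le> 1" using g_le[OF g mu] n1 by simp
  have up: "(\<Sum>k<N. \<bar>a k\<bar>) \<le> 1 + \<gamma>"
    using sum_le_suminf[OF A(2), of "{..<N}"] A(3) by simp
  have low: "1 - \<gamma>/2 \<le> (\<Sum>k<N. \<bar>a k\<bar>)"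
  proof -
    have "dnorm b \<mu> \<le> dnorm b (\<lambda>f. \<mu> f - S f) + (\<Sum>k<N. \<bar>a k\<bar>)"
    proof (rule dnorm_le)
      fix f assume f: "f \<in> Lip0_ball b"
      have "\<bar>S f\<bar> \<le> (\<Sum>k<N. \<bar>a k * molecule b (x k) (y k) f\<bar>)" unfolding S_def by (rule sum_abs)
      also have "\<dots> \<le> (\<Sum>k<N. \<bar>a k\<bar>)"
        by (intro sum_mono) (simp add: abs_mult molecule_bound[OF f] mult_left_le)
      finally have "\<bar>S f\<bar> \<le> (\<Sum>k<N. \<bar>a k\<bar>)" .
      moreover have "\<bar>\<mu> f - S f\<bar> \<le> dnorm b (\<lambda>f. \<mu> f - S f)" using dnorm_ge[OF bmS f] by simp
      ultimately show "\<bar>\<mu> f\<bar> \<le> dnorm b (\<lambda>f. \<mu> f - S f) + (\<Sum>k<N. \<bar>a k\<bar>)" by linarith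
    qed
    then show ?thesis using n1 dS by linarith
  qed
  have sumeq: "(\<Sum>k<N. \<bar>a k\<bar> * (sgn (a k) * g (molecule b (x k) (y k)))) = g S"
    unfolding gS by (intro sum.cong) (auto simp: mult.assoc[symmetric] abs_mult_sgn)
  have "\<exists>k\<in>{..<N}. 0 < \<bar>a k\<bar> \<and> tt + \<gamma> < sgn (a k) * g (molecule b (x k) (y k))"
    by (rule avg[where \<eta>=\<gamma>]) (use up low tt gpos gSl gm gmu1 sumeq in auto)
  then obtain k where k: "a k \<noteq> 0" "tt + \<gamma> < sgn (a k) * g (molecule b (x k) (y k))" by auto
  have s: "sgn (a k) = 1 \<or> sgn (a k) = -1" using k(1) by (auto simp: sgn_real_def)
  have "g (\<lambda>f. sgn (a k) * molecule b (x k) (y k) f) = sgn (a k) * g (molecule b (x k) (y k))"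
    by (rule g_scale[OF g molecule_fs])
  then show ?thesis using k s A(1,5) by metis
qed



theorem proposition6p3:
  fixes b :: "'a::metric_space" and \<mu> :: "('a \<Rightarrow> real) \<Rightarrow> real"
  assumes "\<mu> \<in> free_space b" and "dnorm b \<mu> = 1"
    and "\<forall>\<eta>>0. \<exists>(a::nat \<Rightarrow> real) (x::nat \<Rightarrow> 'a) (y::nat \<Rightarrow> 'a).
           (\<forall>k. x k \<noteq> y k) \<and> summable (\<lambda>k. \<bar>a k\<bar>) \<and> (\<Sum>k. \<bar>a k\<bar>) < 1 + \<eta>
         \<and> (\<lambda>n. dnorm b (\<lambda>f. \<mu> f - (\<Sum>k<n. a k * molecule b (x k) (y k) f))) \<longlonglongrightarrow> 0
         \<and> (\<forall>k. discretely_connectable (x k) (y k))"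
  shows "Delta_point b \<mu>"
  unfolding Delta_point_def
proof (intro conjI ballI allI impI)
  note mu = assms(1) and n1 = assms(2) and H = assms(3)
  show "\<mu> \<in> free_space b" "dnorm b \<mu> = 1" using mu n1 by auto
  fix g \<alpha> assume g: "g \<in> free_dual_sphere b" and apos: "\<alpha> > 0" and mus: "\<mu> \<in> free_slice b g \<alpha>"
  have key: "\<exists>w\<in>free_slice b g \<alpha>. dnorm b (\<lambda>f. \<mu> f - w f) > 2 - \<epsilon>" if e: "\<epsilon> > 0" for \<epsilon>
  proof -
    define t0 where "t0 = 1 - min \<alpha> 3"
    have t0b: "-2 \<le> t0" "t0 < 1" "1 - \<alpha> \<le> t0" using apos by (auto simp: t0_def)
    have gmu: "\<bar>g \<mu>\<bar> \<le> 1" using g_le[OF g mu] n1 by simp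
    have "g \<mu> > 1 - \<alpha>" using mus by (simp add: free_slice_def)
    hence gt: "g \<mu> > t0" using gmu by (auto simp: t0_def min_def abs_le_iff)
    define \<gamma> where "\<gamma> = (g \<mu> - t0) / 3"
    have gpos: "\<gamma> > 0" using gt by (simp add: \<gamma>_def)
    have gm': "g \<mu> > t0 + 3 * (\<gamma>/2)" using gt by (simp add: \<gamma>_def field_simps)
    have g2: "\<gamma>/2 > 0" using gpos by simp
    have SS: "\<exists>x y s. x \<noteq> y \<and> discretely_connectable x y \<and> (s = 1 \<or> s = -1) \<and> g (\<lambda>f. s * molecule b x y f) > t0 + \<gamma>/2"
      by (rule series_step[where g=g and b=b and \<mu>=\<mu> and \<gamma>="\<gamma>/2" and tt=t0, OF g mu n1 H g2 t0b(1) gm'])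
    then obtain x y s where xys: "x \<noteq> y" "discretely_connectable x y" "s = 1 \<or> s = -1"
      "g (\<lambda>f. s * molecule b x y f) > t0 + \<gamma>/2" by blast
    obtain \<delta> where dpos: "\<delta> > 0" and far: "\<forall>u v. u \<noteq> v \<longrightarrow> dist u v < \<delta> \<longrightarrow> dnorm b (\<lambda>f. \<mu> f - molecule b u v f) > 2 - \<epsilon>"
      using far_molecule[OF mu n1 e] by blast
    have CS: "\<exists>u v. u \<noteq> v \<and> dist u v < \<delta> \<and> g (\<lambda>f. s * molecule b u v f) > t0"
      by (rule chain_step[where g=g and b=b and x=x and y=y and \<delta>=\<delta> and \<gamma>="\<gamma>/2" and tt=t0 and s=s,
            OF g xys(1,2) dpos g2 t0b(1) less_imp_le[OF t0b(2)] xys(4)])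
    then obtain u v where uv: "u \<noteq> v" "dist u v < \<delta>" "g (\<lambda>f. s * molecule b u v f) > t0" by blast
    define w where "w = (\<lambda>f. s * molecule b u v f)"
    have wfs: "w \<in> free_space b" unfolding w_def by (intro fs_scale molecule_fs)
    have "dnorm b w \<le> \<bar>s\<bar> * dnorm b (molecule b u v)"
      unfolding w_def by (rule dnorm_scale_le[OF dual_bdd[OF molecule_dual]])
    hence wn: "dnorm b w \<le> 1" using molecule_dnorm[of b u v] xys(3) by auto
    have wsl: "w \<in> free_slice b g \<alpha>" unfolding free_slice_def using wfs wn uv(3) t0b(3) by (auto simp: w_def)
    have "dnorm b (\<lambda>f. \<mu> f - w f) > 2 - \<epsilon>"
      using xys(3)
    proof
      assume "s = 1"
      hence "w = molecule b u v" by (simp add: w_def)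
      moreover have "dnorm b (\<lambda>f. \<mu> f - molecule b u v f) > 2 - \<epsilon>" by (rule far[rule_format, OF uv(1,2)])
      ultimately show ?thesis by simp
    next
      assume "s = -1"
      hence weq: "w = molecule b v u" unfolding w_def molecule_swap[of b u v] by simp
      have vu: "v \<noteq> u" "dist v u < \<delta>" using uv(1,2) by (auto simp: dist_commute)
      have "dnorm b (\<lambda>f. \<mu> f - molecule b v u f) > 2 - \<epsilon>" by (rule far[rule_format, OF vu])
      then show ?thesis using weq by simp
    qed
    then show ?thesis using wsl by blast
  qed
  have ub: "dnorm b (\<lambda>f. \<mu> f - w f) \<le> 2" if w: "w \<in> free_slice b g \<alpha>" for w
  proof -
    have wfs: "w \<in> free_space b" and wn: "dnorm b w \<le> 1" using w by (auto simp: free_slice_def)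
    have "dnorm b (\<lambda>f. \<mu> f + (-1) * w f) \<le> dnorm b \<mu> + dnorm b (\<lambda>f. (-1) * w f)"
      by (intro dnorm_add_le fs_bdd mu fs_scale wfs)
    moreover have "dnorm b (\<lambda>f. (-1) * w f) \<le> \<bar>-1\<bar> * dnorm b w" by (intro dnorm_scale_le fs_bdd wfs)
    ultimately show ?thesis using n1 wn by simp
  qed
  show "Sup {dnorm b (\<lambda>f. \<mu> f - w f) | w. w \<in> free_slice b g \<alpha>} = 2"
  proof (rule cSup_eq_non_empty)
    show "{dnorm b (\<lambda>f. \<mu> f - w f) | w. w \<in> free_slice b g \<alpha>} \<noteq> {}" using mus by blast
    show "\<And>z. z \<in> {dnorm b (\<lambda>f. \<mu> f - w f) | w. w \<in> free_slice b g \<alpha>} \<Longrightarrow> z \<le> 2" using ub by blast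
    fix y assume yb: "\<And>z. z \<in> {dnorm b (\<lambda>f. \<mu> f - w f) | w. w \<in> free_slice b g \<alpha>} \<Longrightarrow> z \<le> y"
    show "2 \<le> y"
    proof (rule ccontr)
      assume "\<not> 2 \<le> y"
      hence "2 - y > 0" by simp
      from key[OF this] obtain w where w: "w \<in> free_slice b g \<alpha>" "dnorm b (\<lambda>f. \<mu> f - w f) > 2 - (2 - y)" by blast
      have "dnorm b (\<lambda>f. \<mu> f - w f) \<le> y" by (rule yb) (use w(1) in blast)
      with w(2) show False by simp
    qed
  qed
qed


end
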